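(* Let $\mathcal{X}=\{1,\ldots,n\}$, let $p$ be a probability vector on $\mathcal{X}$ with all entries positive (the prior of $X$), with entries in non-increasing order $p_{[1]}\geq\cdots\geq p_{[n]}$, and let $k<n$ be a positive integer. Then the maximum over all feasible channels of the posterior guesswork entropy $H(X\mid Y)=\sum_{y:\,p(y)>0}p(y)\sum_{i=1}^{n}i\,(p_{X\mid y})_{[i]}$ equals $$\min_{1\leq j\leq k}\Big\{\sum_{i=1}^{j-1}i\,p_{[i]}+\Big(1-\sum_{i=1}^{j-1}p_{[i]}\Big)\frac{k+j}{2}\Big\}.$$
   Context: $q_{[i]}$ denotes the $i$-th largest entry of a vector $q$, and $p_{X\mid y}=(p(x\mid y))_{x\in\mathcal{X}}$. A channel is a discrete output set $\mathcal{Y}$ with conditional probabilities $p(y\mid x)\geq0$, $\sum_y p(y\mid x)=1$; $Y$ is its output when the input is $X\sim p$, with $p(y)=\sum_x p(x)p(y\mid x)$ and $p(x\mid y)=p(x)p(y\mid x)/p(y)$. The pre-image of $y$ is $\{x:p(y\mid x)>0\}$; the channel is feasible if every pre-image has at most $k$ elements. *)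

theory Defs
  imports "HOL-Analysis.Analysis"
begin

text \<open>Inputs are X = {1..n}; vectors on X are functions nat => real restricted to {1..n}.
  A channel is W :: nat => nat => real with W x y = p(y|x); the (discrete) output set is nat.\<close>

definition desc_entry :: "nat \<Rightarrow> (nat \<Rightarrow> real) \<Rightarrow> nat \<Rightarrow> real" where
  "desc_entry n q i = rev (sort (map q [1..<Suc n])) ! (i - 1)"

definition guesswork :: "nat \<Rightarrow> (nat \<Rightarrow> real) \<Rightarrow> real" where
  "guesswork n q = (\<Sum>i=1..n. real i * desc_entry n q i)"

definition is_channel :: "nat \<Rightarrow> (nat \<Rightarrow> nat \<Rightarrow> real) \<Rightarrow> bool" where
  "is_channel n W \<longleftrightarrow> (\<forall>x\<in>{1..n}. (\<forall>y. W x y \<ge> 0) \<and> ((\<lambda>y. W x y) has_sum 1) UNIV)"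

definition preimage :: "nat \<Rightarrow> (nat \<Rightarrow> nat \<Rightarrow> real) \<Rightarrow> nat \<Rightarrow> nat set" where
  "preimage n W y = {x\<in>{1..n}. W x y > 0}"

definition feasible :: "nat \<Rightarrow> nat \<Rightarrow> (nat \<Rightarrow> nat \<Rightarrow> real) \<Rightarrow> bool" where
  "feasible n k W \<longleftrightarrow> is_channel n W \<and> (\<forall>y. card (preimage n W y) \<le> k)"

definition out_prob :: "nat \<Rightarrow> (nat \<Rightarrow> real) \<Rightarrow> (nat \<Rightarrow> nat \<Rightarrow> real) \<Rightarrow> nat \<Rightarrow> real" where
  "out_prob n p W y = (\<Sum>x=1..n. p x * W x y)"

definition posterior :: "nat \<Rightarrow> (nat \<Rightarrow> real) \<Rightarrow> (nat \<Rightarrow> nat \<Rightarrow> real) \<Rightarrow> nat \<Rightarrow> nat \<Rightarrow> real" where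
  "posterior n p W y x = p x * W x y / out_prob n p W y"

definition cond_guesswork :: "nat \<Rightarrow> (nat \<Rightarrow> real) \<Rightarrow> (nat \<Rightarrow> nat \<Rightarrow> real) \<Rightarrow> real" where
  "cond_guesswork n p W =
     infsum (\<lambda>y. if out_prob n p W y > 0
                 then out_prob n p W y * guesswork n (posterior n p W y) else 0) UNIV"

definition bound_term :: "nat \<Rightarrow> nat \<Rightarrow> (nat \<Rightarrow> real) \<Rightarrow> nat \<Rightarrow> real" where
  "bound_term n k p j =
     (\<Sum>i=1..j-1. real i * desc_entry n p i)
     + (1 - (\<Sum>i=1..j-1. desc_entry n p i)) * ((real k + real j) / 2)"

end

theory Submission
  imports Defs
begin

definition compat :: "nat \<Rightarrow> (nat \<Rightarrow> nat) \<Rightarrow> (nat \<Rightarrow> real) \<Rightarrow> bool" where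
  "compat n \<psi> q \<longleftrightarrow> (\<forall>x\<in>{1..n}. \<forall>y\<in>{1..n}. \<psi> x < \<psi> y \<longrightarrow> q y \<le> q x)"

lemma sorting_exists:
  fixes q :: "nat \<Rightarrow> real"
  shows "\<exists>\<psi>. bij_betw \<psi> {1..n} {1..n} \<and> compat n \<psi> q \<and> (\<forall>x\<in>{1..n}. desc_entry n q (\<psi> x) = q x)"
proof -
  define L where "L = [1..<Suc n]"
  define ys where "ys = sort_key q L"
  define zs where "zs = rev ys"
  have s1: "sort (map q L) = map q ys"
    unfolding ys_def by (rule properties_for_sort) (simp_all add: mset_map)
  have de: "desc_entry n q i = q (zs ! (i - 1))" if "1 \<le> i" "i \<le> n" for i
    using that unfolding desc_entry_def s1[unfolded L_def] zs_def ys_def L_def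
    by (simp add: rev_map)
  have lz: "length zs = n" and dz: "distinct zs" and sz: "set zs = {1..n}"
    by (auto simp: zs_def ys_def L_def)
  define \<tau> where "\<tau> i = zs ! (i - 1)" for i
  have bt: "bij_betw \<tau> {1..n} {1..n}"
  proof (rule bij_betw_imageI)
    show "inj_on \<tau> {1..n}"
      unfolding inj_on_def \<tau>_def using dz lz by (auto simp: nth_eq_iff_index_eq)
    show "\<tau> ` {1..n} = {1..n}"
    proof
      show "\<tau> ` {1..n} \<subseteq> {1..n}"
      proof
        fix x assume "x \<in> \<tau> ` {1..n}"
        then obtain i where "i \<in> {1..n}" "x = zs ! (i - 1)" unfolding \<tau>_def by auto
        then have "x \<in> set zs" using lz by auto
        then show "x \<in> {1..n}" using sz by simp
      qed
      show "{1..n} \<subseteq> \<tau> ` {1..n}"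
      proof
        fix x assume "x \<in> {1..n}"
        then obtain i where "i < n" "zs ! i = x" using sz lz by (metis in_set_conv_nth)
        then show "x \<in> \<tau> ` {1..n}" unfolding \<tau>_def
          by (intro image_eqI[of _ _ "Suc i"]) auto
      qed
    qed
  qed
  define \<psi> where "\<psi> = the_inv_into {1..n} \<tau>"
  have bp: "bij_betw \<psi> {1..n} {1..n}" unfolding \<psi>_def by (rule bij_betw_the_inv_into[OF bt])
  have tp: "\<tau> (\<psi> x) = x" if "x \<in> {1..n}" for x
    unfolding \<psi>_def using f_the_inv_into_f_bij_betw[OF bt] that by auto
  have sorted_ys: "sorted (map q ys)" unfolding ys_def by simp
  have mono: "q (zs ! j) \<le> q (zs ! i)" if "i < j" "j < n" for i j
  proof -
    have ly: "length ys = n" using lz zs_def by simp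
    have "q (ys ! (n - Suc j)) \<le> q (ys ! (n - Suc i))"
      using sorted_nth_mono[OF sorted_ys, of "n - Suc j" "n - Suc i"] that ly by auto
    then show ?thesis unfolding zs_def using that ly by (simp add: rev_nth)
  qed
  have "compat n \<psi> q"
    unfolding compat_def
  proof (intro ballI impI)
    fix x y assume x: "x \<in> {1..n}" and y: "y \<in> {1..n}" and lt: "\<psi> x < \<psi> y"
    have px: "\<psi> x \<in> {1..n}" and py: "\<psi> y \<in> {1..n}" using bp x y bij_betwE by blast+
    have "q (zs ! (\<psi> y - 1)) \<le> q (zs ! (\<psi> x - 1))" using px py lt by (intro mono) auto
    then show "q y \<le> q x" using tp[OF x] tp[OF y] unfolding \<tau>_def by simp
  qed
  moreover have "\<forall>x\<in>{1..n}. desc_entry n q (\<psi> x) = q x"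
  proof
    fix x assume x: "x \<in> {1..n}"
    have px: "\<psi> x \<in> {1..n}" using bp x bij_betwE by blast
    then show "desc_entry n q (\<psi> x) = q x" using de[of "\<psi> x"] tp[OF x] unfolding \<tau>_def by simp
  qed
  ultimately show ?thesis using bp by blast
qed

lemma sum_compare_sets:
  fixes q :: "nat \<Rightarrow> real"
  assumes fin: "finite A" "finite B" and card: "card B \<le> card A"
    and nn: "\<And>x. x \<in> A \<union> B \<Longrightarrow> 0 \<le> q x"
    and sep: "\<And>x y. x \<in> A - B \<Longrightarrow> y \<in> B - A \<Longrightarrow> q y \<le> q x"
  shows "sum q B \<le> sum q A"
proof (cases "B - A = {}")
  case True
  then have "B \<subseteq> A" by auto
  then show ?thesis using nn by (intro sum_mono2[OF fin(1)]) auto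
next
  case False
  define c where "c = Max (q ` (B - A))"
  have cin: "c \<in> q ` (B - A)" unfolding c_def using False fin by (intro Max_in) auto
  have le1: "sum q (B - A) \<le> of_nat (card (B - A)) * c"
    using sum_bounded_above[of "B - A" q c] fin unfolding c_def by auto
  have ge1: "of_nat (card (A - B)) * c \<le> sum q (A - B)"
    using sum_bounded_below[of "A - B" c q] cin sep by auto
  have c0: "0 \<le> c" using cin sep nn by auto
  have cc: "card (B - A) \<le> card (A - B)"
  proof -
    have "card A = card (A \<inter> B) + card (A - B)" using fin
      by (metis card_Diff_subset_Int Int_lower1 card_mono le_add_diff_inverse finite_Int Int_commute Diff_Diff_Int inf_le2 card_Diff_subset)
    moreover have "card B = card (A \<inter> B) + card (B - A)" using fin
      by (metis Int_commute card_Int_Diff)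
    ultimately show ?thesis using card by linarith
  qed
  have "sum q B = sum q (A \<inter> B) + sum q (B - A)"
    using fin by (metis Int_commute sum.Int_Diff)
  also have "\<dots> \<le> sum q (A \<inter> B) + of_nat (card (B - A)) * c" using le1 by simp
  also have "\<dots> \<le> sum q (A \<inter> B) + of_nat (card (A - B)) * c"
    using cc c0 by (simp add: mult_right_mono)
  also have "\<dots> \<le> sum q (A \<inter> B) + sum q (A - B)" using ge1 by simp
  also have "\<dots> = sum q A" using fin by (metis sum.Int_Diff)
  finally show ?thesis .
qed

lemma layer_sum:
  fixes q :: "nat \<Rightarrow> real" and f :: "nat \<Rightarrow> nat"
  assumes "finite X"
  shows "(\<Sum>x\<in>X. real (card {t\<in>{1..n}. t \<le> f x}) * q x)
       = (\<Sum>t\<in>{1..n}. \<Sum>x\<in>{x\<in>X. t \<le> f x}. q x)"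
proof -
  have "(\<Sum>x\<in>X. real (card {t\<in>{1..n}. t \<le> f x}) * q x)
      = (\<Sum>x\<in>X. \<Sum>t\<in>{1..n}. if t \<le> f x then q x else 0)"
    by (intro sum.cong refl) (simp add: sum.inter_filter[symmetric])
  also have "\<dots> = (\<Sum>t\<in>{1..n}. \<Sum>x\<in>X. if t \<le> f x then q x else 0)"
    by (rule sum.swap)
  also have "\<dots> = (\<Sum>t\<in>{1..n}. \<Sum>x\<in>{x\<in>X. t \<le> f x}. q x)"
    by (rule sum.cong[OF refl], rule sum.inter_filter[symmetric, OF assms])
  finally show ?thesis .
qed

lemma Lcore:
  fixes q :: "nat \<Rightarrow> real" and \<psi> \<phi> :: "nat \<Rightarrow> nat"
  assumes bij: "bij_betw \<psi> {1..n} {1..n}" and cp: "compat n \<psi> q"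
    and nn: "\<forall>x\<in>{1..n}. 0 \<le> q x" and pos: "\<forall>x\<in>{1..n}. 1 \<le> \<phi> x"
    and inj: "inj_on \<phi> {x\<in>{1..n}. q x \<noteq> 0}"
  shows "(\<Sum>x\<in>{1..n}. real (\<psi> x) * q x) \<le> (\<Sum>x\<in>{1..n}. real (\<phi> x) * q x)"
proof -
  let ?X = "{1..n::nat}"
  have layer: "(\<Sum>x\<in>{x\<in>?X. t \<le> \<psi> x}. q x) \<le> (\<Sum>x\<in>{x\<in>?X. t \<le> \<phi> x}. q x)"
    if t: "t \<in> {1..n}" for t
  proof -
    define B where "B = {x\<in>?X. t \<le> \<psi> x}"
    define A where "A = {x\<in>?X. t \<le> \<phi> x}"
    define Z where "Z = {x\<in>?X. q x = 0}"
    have cB: "card B = n + 1 - t"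
    proof -
      have "\<psi> ` B = {t..n}"
      proof
        show "\<psi> ` B \<subseteq> {t..n}" unfolding B_def using bij bij_betwE by fastforce
        show "{t..n} \<subseteq> \<psi> ` B"
        proof
          fix i assume i: "i \<in> {t..n}"
          then have "i \<in> ?X" using t by auto
          then obtain x where "x \<in> ?X" "\<psi> x = i" using bij by (metis bij_betw_def imageE)
          then show "i \<in> \<psi> ` B" unfolding B_def using i by auto
        qed
      qed
      moreover have "inj_on \<psi> B" using bij unfolding B_def bij_betw_def
        by (auto intro: inj_on_subset)
      ultimately have "card B = card {t..n}" by (metis card_image)
      then show ?thesis by simp
    qed
    have cZ: "card (?X - (A \<union> Z)) \<le> t - 1"
    proof -
      have sub: "?X - (A \<union> Z) \<subseteq> {x\<in>?X. q x \<noteq> 0}" unfolding A_def Z_def by auto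
      have "inj_on \<phi> (?X - (A \<union> Z))" using inj_on_subset[OF inj sub] .
      moreover have "\<phi> ` (?X - (A \<union> Z)) \<subseteq> {1..<t}" using pos unfolding A_def Z_def by auto
      ultimately have "card (?X - (A \<union> Z)) \<le> card {1..<t}"
        by (meson card_inj_on_le finite_atLeastLessThan)
      then show ?thesis by simp
    qed
    have cA: "card B \<le> card (A \<union> Z)"
    proof -
      have "A \<union> Z \<subseteq> ?X" unfolding A_def Z_def by auto
      then have "card ?X = card (A \<union> Z) + card (?X - (A \<union> Z))"
        by (metis card_Diff_subset card_mono finite_atLeastAtMost finite_subset le_add_diff_inverse)
      then show ?thesis using cB cZ t by (simp, linarith)
    qed
    have "sum q B \<le> sum q (A \<union> Z)"
    proof (rule sum_compare_sets)
      show "finite (A \<union> Z)" "finite B" unfolding A_def B_def Z_def by auto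
      show "card B \<le> card (A \<union> Z)" by (rule cA)
      show "0 \<le> q x" if "x \<in> A \<union> Z \<union> B" for x using that nn unfolding A_def B_def Z_def by auto
      show "q y \<le> q x" if "x \<in> A \<union> Z - B" "y \<in> B - (A \<union> Z)" for x y
      proof -
        have "x \<in> ?X" "y \<in> ?X" "\<psi> x < \<psi> y" using that unfolding A_def B_def Z_def by auto
        then show ?thesis using cp unfolding compat_def by blast
      qed
    qed
    also have "sum q (A \<union> Z) = sum q A"
    proof -
      have "sum q (A \<union> Z) = sum q A + sum q (Z - A)"
        unfolding A_def Z_def by (subst sum.union_disjoint[symmetric]) (auto intro: sum.cong)
      moreover have "sum q (Z - A) = 0" unfolding Z_def by auto
      ultimately show ?thesis by simp
    qed
    finally show ?thesis unfolding A_def B_def .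
  qed
  have eqpsi: "real (\<psi> x) = real (card {t\<in>{1..n}. t \<le> \<psi> x})" if "x \<in> ?X" for x
  proof -
    have "\<psi> x \<in> ?X" using bij that bij_betwE by blast
    then have "{t\<in>{1..n}. t \<le> \<psi> x} = {1..\<psi> x}" by auto
    then show ?thesis by simp
  qed
  have lephi: "real (card {t\<in>{1..n}. t \<le> \<phi> x}) * q x \<le> real (\<phi> x) * q x" if "x \<in> ?X" for x
  proof -
    have "{t\<in>{1..n}. t \<le> \<phi> x} \<subseteq> {1..\<phi> x}" by auto
    then have "card {t\<in>{1..n}. t \<le> \<phi> x} \<le> \<phi> x" by (metis card_atLeastAtMost card_mono finite_atLeastAtMost diff_Suc_1)
    then show ?thesis using nn that by (intro mult_right_mono) auto
  qed
  have "(\<Sum>x\<in>?X. real (\<psi> x) * q x) = (\<Sum>x\<in>?X. real (card {t\<in>{1..n}. t \<le> \<psi> x}) * q x)"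
    using eqpsi by (intro sum.cong) auto
  also have "\<dots> = (\<Sum>t\<in>{1..n}. \<Sum>x\<in>{x\<in>?X. t \<le> \<psi> x}. q x)" by (rule layer_sum) simp
  also have "\<dots> \<le> (\<Sum>t\<in>{1..n}. \<Sum>x\<in>{x\<in>?X. t \<le> \<phi> x}. q x)" using layer by (intro sum_mono)
  also have "\<dots> = (\<Sum>x\<in>?X. real (card {t\<in>{1..n}. t \<le> \<phi> x}) * q x)" by (rule layer_sum[symmetric]) simp
  also have "\<dots> \<le> (\<Sum>x\<in>?X. real (\<phi> x) * q x)" using lephi by (intro sum_mono)
  finally show ?thesis .
qed

lemma G_sorted:
  fixes q :: "nat \<Rightarrow> real"
  shows "\<exists>\<psi>. bij_betw \<psi> {1..n} {1..n} \<and> compat n \<psi> q \<and>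
     guesswork n q = (\<Sum>x\<in>{1..n}. real (\<psi> x) * q x)"
proof -
  obtain \<psi> where b: "bij_betw \<psi> {1..n} {1..n}" and c: "compat n \<psi> q"
    and d: "\<forall>x\<in>{1..n}. desc_entry n q (\<psi> x) = q x"
    using sorting_exists by blast
  have "guesswork n q = (\<Sum>i\<in>{1..n}. real i * desc_entry n q i)" unfolding guesswork_def by simp
  also have "\<dots> = (\<Sum>x\<in>{1..n}. real (\<psi> x) * desc_entry n q (\<psi> x))"
    by (rule sum.reindex_bij_betw[symmetric, OF b])
  also have "\<dots> = (\<Sum>x\<in>{1..n}. real (\<psi> x) * q x)" using d by simp
  finally show ?thesis using b c by blast
qed

lemma G_upper:
  fixes q :: "nat \<Rightarrow> real" and \<phi> :: "nat \<Rightarrow> nat"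
  assumes nn: "\<forall>x\<in>{1..n}. 0 \<le> q x" and pos: "\<forall>x\<in>{1..n}. 1 \<le> \<phi> x"
    and inj: "inj_on \<phi> {x\<in>{1..n}. q x \<noteq> 0}"
  shows "guesswork n q \<le> (\<Sum>x\<in>{1..n}. real (\<phi> x) * q x)"
  using G_sorted[of n q] Lcore[OF _ _ nn pos inj] by metis

lemma G_exact:
  fixes q :: "nat \<Rightarrow> real" and \<psi> :: "nat \<Rightarrow> nat"
  assumes nn: "\<forall>x\<in>{1..n}. 0 \<le> q x" and b: "bij_betw \<psi> {1..n} {1..n}" and c: "compat n \<psi> q"
  shows "guesswork n q = (\<Sum>x\<in>{1..n}. real (\<psi> x) * q x)"
proof -
  obtain \<psi>' where b': "bij_betw \<psi>' {1..n} {1..n}" and c': "compat n \<psi>' q"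
    and g: "guesswork n q = (\<Sum>x\<in>{1..n}. real (\<psi>' x) * q x)" using G_sorted by blast
  have p1: "\<forall>x\<in>{1..n}. 1 \<le> \<psi>' x" "\<forall>x\<in>{1..n}. 1 \<le> \<psi> x"
    using b b' bij_betwE by fastforce+
  have i1: "inj_on \<psi>' {x\<in>{1..n}. q x \<noteq> 0}" "inj_on \<psi> {x\<in>{1..n}. q x \<noteq> 0}"
    using b b' unfolding bij_betw_def by (auto intro: inj_on_subset)
  have "(\<Sum>x\<in>{1..n}. real (\<psi> x) * q x) \<le> (\<Sum>x\<in>{1..n}. real (\<psi>' x) * q x)"
    by (rule Lcore[OF b c nn p1(1) i1(1)])
  moreover have "(\<Sum>x\<in>{1..n}. real (\<psi>' x) * q x) \<le> (\<Sum>x\<in>{1..n}. real (\<psi> x) * q x)"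
    by (rule Lcore[OF b' c' nn p1(2) i1(2)])
  ultimately show ?thesis using g by linarith
qed

lemma G_scale:
  fixes q :: "nat \<Rightarrow> real"
  assumes nn: "\<forall>x\<in>{1..n}. 0 \<le> q x" and t: "0 \<le> t"
  shows "guesswork n (\<lambda>x. t * q x) = t * guesswork n q"
proof -
  obtain \<psi> where b: "bij_betw \<psi> {1..n} {1..n}" and c: "compat n \<psi> q"
    and g: "guesswork n q = (\<Sum>x\<in>{1..n}. real (\<psi> x) * q x)" using G_sorted by blast
  have c2: "compat n \<psi> (\<lambda>x. t * q x)" using c t unfolding compat_def by (auto intro: mult_left_mono)
  have "guesswork n (\<lambda>x. t * q x) = (\<Sum>x\<in>{1..n}. real (\<psi> x) * (t * q x))"
    using G_exact[OF _ b c2] nn t by simp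
  also have "\<dots> = t * (\<Sum>x\<in>{1..n}. real (\<psi> x) * q x)" by (simp add: sum_distrib_left algebra_simps)
  finally show ?thesis using g by simp
qed

lemma G_cong:
  assumes "\<forall>x\<in>{1..n}. q x = q' x"
  shows "guesswork n q = guesswork n q'"
proof -
  have "map q [1..<Suc n] = map q' [1..<Suc n]" using assms by (intro map_cong) auto
  then show ?thesis unfolding guesswork_def desc_entry_def by (simp only:)
qed

lemma G_zero:
  assumes "\<forall>x\<in>{1..n}. q x = 0"
  shows "guesswork n q = 0"
proof -
  obtain \<psi> where "guesswork n q = (\<Sum>x\<in>{1..n}. real (\<psi> x) * q x)" using G_sorted by blast
  then show ?thesis using assms by simp
qed

lemma bij_from_inj:
  assumes "inj_on \<psi> {1..n::nat}" "\<psi> ` {1..n} \<subseteq> {1..n}"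
  shows "bij_betw \<psi> {1..n} {1..n}"
  using assms endo_inj_surj[of "{1..n}" \<psi>] unfolding bij_betw_def by auto

definition cover :: "(nat set \<times> real) list \<Rightarrow> nat \<Rightarrow> real" where
  "cover Ls x = sum_list (map (\<lambda>Sm. if x \<in> fst Sm then snd Sm else 0) Ls)"

definition total :: "(nat set \<times> real) list \<Rightarrow> real" where
  "total Ls = sum_list (map snd Ls)"

lemma cover_zero: "(\<forall>Sm\<in>set L. x \<notin> fst Sm) \<Longrightarrow> cover L x = 0"
  by (induct L) (auto simp: cover_def)

lemma min_sum_bound:
  fixes v :: "nat \<Rightarrow> real"
  assumes fin: "finite R'" and nn: "\<forall>x\<in>R'. 0 \<le> v x" and le: "\<forall>x\<in>R'. v x \<le> Mx"
    and s: "1 \<le> s" and sum: "sum v R' = real s * M - Mx" and D: "D = M - Mx" "0 \<le> D" and Mx: "0 \<le> Mx"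
  shows "real s * D \<le> (\<Sum>x\<in>R'. min (v x) D)"
proof -
  define B where "B = {x\<in>R'. D \<le> v x}"
  have fB: "finite B" "B \<subseteq> R'" using fin unfolding B_def by auto
  show ?thesis
  proof (cases "s \<le> card B")
    case True
    have "real s * D \<le> real (card B) * D" using True D by (intro mult_right_mono) auto
    also have "\<dots> = (\<Sum>x\<in>B. min (v x) D)" unfolding B_def by simp
    also have "\<dots> \<le> (\<Sum>x\<in>R'. min (v x) D)"
      using fB nn D by (intro sum_mono2[OF fin]) auto
    finally show ?thesis .
  next
    case False
    have split: "(\<Sum>x\<in>R'. min (v x) D) = (\<Sum>x\<in>B. min (v x) D) + (\<Sum>x\<in>R'-B. min (v x) D)"
      using fB fin by (metis sum.subset_diff add.commute)
    have p1: "(\<Sum>x\<in>B. min (v x) D) = real (card B) * D" unfolding B_def by simp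
    have p2: "(\<Sum>x\<in>R'-B. min (v x) D) = (\<Sum>x\<in>R'-B. v x)"
      unfolding B_def by (intro sum.cong) auto
    have p3: "(\<Sum>x\<in>R'-B. v x) = sum v R' - sum v B"
      using fB fin by (simp add: sum_diff)
    have p4: "sum v B \<le> real (card B) * Mx" using sum_bounded_above[of B v Mx] le fB by auto
    have cb: "real (card B) + 1 \<le> real s" using False by simp
    have "real s * D = real s * M - real s * Mx" unfolding D(1) by (simp add: algebra_simps)
    also have "\<dots> \<le> real (card B) * D + (real s * M - Mx) - real (card B) * Mx"
    proof -
      have "0 \<le> real (card B) * D + (real s - 1 - real (card B)) * Mx"
        using cb D Mx by (intro add_nonneg_nonneg mult_nonneg_nonneg) auto
      then show ?thesis by (simp add: algebra_simps)
    qed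
    also have "\<dots> \<le> (\<Sum>x\<in>R'. min (v x) D)" using split p1 p2 p3 p4 sum by linarith
    finally show ?thesis .
  qed
qed

lemma decomp:
  fixes v :: "nat \<Rightarrow> real"
  assumes "finite R" "\<forall>x\<in>R. 0 \<le> v x" "\<forall>x\<in>R. v x \<le> M" "real s * M = sum v R" "0 \<le> M"
  shows "\<exists>Ls. (\<forall>Sm\<in>set Ls. fst Sm \<subseteq> R \<and> card (fst Sm) = s \<and> 0 \<le> snd Sm)
           \<and> (\<forall>x\<in>R. cover Ls x = v x) \<and> total Ls = M"
  using assms
proof (induction "card R" arbitrary: R s v M rule: less_induct)
  case less
  note fin = less.prems(1) and nn = less.prems(2) and le = less.prems(3) and sm = less.prems(4)
    and M0 = less.prems(5)
  show ?case
  proof (cases "R = {} \<or> s = 0")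
    case True
    have v0: "\<forall>x\<in>R. v x = 0"
    proof (cases "R = {}")
      case False
      then have "s = 0" using True by auto
      then have "sum v R = 0" using sm by simp
      then show ?thesis using sum_nonneg_eq_0_iff[OF fin] nn by blast
    qed simp
    show ?thesis
    proof (cases "M = 0")
      case True
      then show ?thesis using v0 by (intro exI[of _ "[]"]) (auto simp: cover_def total_def)
    next
      case False
      then have "s = 0" using True sm by auto
      then show ?thesis using v0 by (intro exI[of _ "[({}, M)]"]) (auto simp: cover_def total_def M0)
    qed
  next
    case False
    then have Rne: "R \<noteq> {}" and s1: "1 \<le> s" by auto
    have "Max (v ` R) \<in> v ` R" using fin Rne by simp
    then obtain x0 where x0: "x0 \<in> R" "v x0 = Max (v ` R)" by auto
    have vmax: "\<forall>x\<in>R. v x \<le> v x0" using x0 fin by auto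
    define Mx where "Mx = v x0"
    define D where "D = M - Mx"
    define R' where "R' = R - {x0}"
    have Mx0: "0 \<le> Mx" using nn x0 Mx_def by auto
    have D0: "0 \<le> D" using le x0 unfolding D_def Mx_def by auto
    have finR': "finite R'" using fin R'_def by auto
    have cR': "card R' < card R" using fin x0 R'_def by (metis card_Diff1_less)
    have sumR': "sum v R' = real s * M - Mx"
      using sm fin x0 unfolding R'_def Mx_def by (simp add: sum_diff1)
    define m where "m x = min (v x) D" for x
    define \<Sigma> where "\<Sigma> = (\<Sum>x\<in>R'. m x)"
    have sb: "real s * D \<le> \<Sigma>" unfolding \<Sigma>_def m_def
      by (rule min_sum_bound[OF finR' _ _ s1 sumR' D_def D0 Mx0])
         (use nn le vmax Mx_def R'_def in auto)
    define \<theta> where "\<theta> = (if \<Sigma> = 0 then 0 else real s * D / \<Sigma>)"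
    have th: "0 \<le> \<theta>" "\<theta> \<le> 1"
    proof -
      have "0 \<le> real s * D" using D0 by simp
      then have "0 \<le> \<Sigma>" using sb by linarith
      then show "0 \<le> \<theta>" "\<theta> \<le> 1" using sb D0 unfolding \<theta>_def by (auto simp: divide_simps)
    qed
    define u where "u x = \<theta> * m x" for x
    have m0: "\<forall>x\<in>R'. 0 \<le> m x" using nn D0 unfolding m_def R'_def by auto
    have u0: "\<forall>x\<in>R'. 0 \<le> u x" using m0 th unfolding u_def by auto
    have uD: "\<forall>x\<in>R'. u x \<le> D"
    proof
      fix x assume "x \<in> R'"
      have "u x \<le> 1 * m x" unfolding u_def using th m0 \<open>x \<in> R'\<close> by (intro mult_right_mono) auto
      then show "u x \<le> D" unfolding m_def by simp
    qed
    have uv: "\<forall>x\<in>R'. u x \<le> v x"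
    proof
      fix x assume "x \<in> R'"
      have "u x \<le> 1 * m x" unfolding u_def using th m0 \<open>x \<in> R'\<close> by (intro mult_right_mono) auto
      then show "u x \<le> v x" unfolding m_def by simp
    qed
    have usum: "real s * D = sum u R'"
    proof (cases "\<Sigma> = 0")
      case True
      have "0 \<le> real s * D" using D0 by simp
      then have "real s * D = 0" using sb True by linarith
      then show ?thesis unfolding u_def \<theta>_def using True by simp
    next
      case False
      have "sum u R' = \<theta> * \<Sigma>" unfolding u_def \<Sigma>_def by (simp add: sum_distrib_left)
      then show ?thesis unfolding \<theta>_def using False by simp
    qed
    obtain Lu where Lu: "\<forall>Sm\<in>set Lu. fst Sm \<subseteq> R' \<and> card (fst Sm) = s \<and> 0 \<le> snd Sm"
      "\<forall>x\<in>R'. cover Lu x = u x" "total Lu = D"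
      using less.hyps[OF cR' finR' u0 uD usum D0] by blast
    define w where "w x = v x - u x" for x
    have w0: "\<forall>x\<in>R'. 0 \<le> w x" using uv unfolding w_def by auto
    have wM: "\<forall>x\<in>R'. w x \<le> Mx"
    proof
      fix x assume x: "x \<in> R'"
      then have "0 \<le> u x" "v x \<le> v x0" using u0 vmax R'_def by auto
      then show "w x \<le> Mx" unfolding w_def Mx_def by linarith
    qed
    have wsum: "real (s - 1) * Mx = sum w R'"
    proof -
      have "sum w R' = sum v R' - sum u R'" unfolding w_def by (simp add: sum_subtractf)
      also have "\<dots> = real s * M - Mx - real s * D" using sumR' usum by simp
      also have "\<dots> = (real s - 1) * Mx" unfolding D_def by (simp add: algebra_simps)
      finally show ?thesis using s1 by (simp add: of_nat_diff)
    qed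
    obtain Lw where Lw: "\<forall>Sm\<in>set Lw. fst Sm \<subseteq> R' \<and> card (fst Sm) = s - 1 \<and> 0 \<le> snd Sm"
      "\<forall>x\<in>R'. cover Lw x = w x" "total Lw = Mx"
      using less.hyps[OF cR' finR' w0 wM wsum Mx0] by blast
    define Lw' where "Lw' = map (\<lambda>Sm. (insert x0 (fst Sm), snd Sm)) Lw"
    define Ls where "Ls = Lu @ Lw'"
    have x0R': "x0 \<notin> R'" unfolding R'_def by simp
    have P1: "\<forall>Sm\<in>set Ls. fst Sm \<subseteq> R \<and> card (fst Sm) = s \<and> 0 \<le> snd Sm"
    proof
      fix Sm assume "Sm \<in> set Ls"
      then consider "Sm \<in> set Lu" | T where "T \<in> set Lw" "Sm = (insert x0 (fst T), snd T)"
        unfolding Ls_def Lw'_def by auto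
      then show "fst Sm \<subseteq> R \<and> card (fst Sm) = s \<and> 0 \<le> snd Sm"
      proof cases
        case 1
        then show ?thesis using Lu(1) R'_def by auto
      next
        case 2
        have "fst T \<subseteq> R'" "card (fst T) = s - 1" "0 \<le> snd T" using Lw(1) 2(1) by auto
        moreover have "finite (fst T)" using \<open>fst T \<subseteq> R'\<close> finR' finite_subset by blast
        moreover have "x0 \<notin> fst T" using \<open>fst T \<subseteq> R'\<close> x0R' by auto
        ultimately have "card (insert x0 (fst T)) = s" using s1 by simp
        then show ?thesis using 2(2) \<open>fst T \<subseteq> R'\<close> \<open>0 \<le> snd T\<close> x0(1) R'_def by auto
      qed
    qed
    have cov0: "cover Lu x0 = 0"
      using Lu(1) x0R' by (intro cover_zero) auto
    have covw0: "cover Lw' x0 = total Lw"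
      unfolding cover_def total_def Lw'_def by (simp add: comp_def)
    have covw: "cover Lw' x = cover Lw x" if "x \<in> R'" for x
    proof -
      have "x \<noteq> x0" using that x0R' by auto
      then show ?thesis unfolding cover_def Lw'_def by (simp add: comp_def cong: if_cong)
    qed
    have P2: "\<forall>x\<in>R. cover Ls x = v x"
    proof
      fix x assume x: "x \<in> R"
      have cLs: "cover Ls x = cover Lu x + cover Lw' x" unfolding Ls_def cover_def by simp
      show "cover Ls x = v x"
      proof (cases "x = x0")
        case True
        then show ?thesis using cLs cov0 covw0 Lw(3) Mx_def by simp
      next
        case False
        then have "x \<in> R'" using x R'_def by auto
        then show ?thesis using cLs covw Lu(2) Lw(2) w_def by simp
      qed
    qed
    have P3: "total Ls = M"
    proof -
      have "total Lw' = total Lw" unfolding total_def Lw'_def by (simp add: comp_def)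
      then show ?thesis unfolding Ls_def using Lu(3) Lw(3) D_def by (simp add: total_def)
    qed
    show ?thesis using P1 P2 P3 by blast
  qed
qed

lemma modinj: "(a::nat) < L \<Longrightarrow> b < L \<Longrightarrow> (a + u) mod L = (b + u) mod L \<Longrightarrow> a = b"
proof (induction a b rule: linorder_wlog)
  case (le a b)
  then have "L dvd (b + u) - (a + u)" using mod_eq_dvd_iff_nat[of "a+u" "b+u" L] by auto
  then have "L dvd b - a" by simp
  moreover have "b - a < L" using le by auto
  ultimately have "b - a = 0" using dvd_imp_le by fastforce
  then show ?case using le by auto
next
  case (sym a b) then show ?case by auto
qed

lemma gs: "2 * (\<Sum>i<s. real i) = real s * (real s - 1)"
  by (induct s) (auto simp: algebra_simps)

lemma gs2: "2 * (\<Sum>i\<in>{j..j+d}. real i) = (real d + 1) * (2 * real j + real d)"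
  by (induct d) (auto simp: algebra_simps)

lemma shift_bij:
  assumes "0 < (L::nat)"
  shows "bij_betw (\<lambda>u. (a + u) mod L) {0..<L} {0..<L}"
proof -
  have "inj_on (\<lambda>u. (a + u) mod L) {0..<L}"
    unfolding inj_on_def by (auto intro: modinj simp: add.commute)
  moreover have "(\<lambda>u. (a + u) mod L) ` {0..<L} \<subseteq> {0..<L}" using assms by auto
  ultimately show ?thesis using endo_inj_surj[of "{0..<L}"] unfolding bij_betw_def by auto
qed

lemma sumP_bound:
  assumes T: "T \<subseteq> {1..<j}" and j: "1 \<le> j" "j \<le> k"
  shows "(\<Sum>i\<in>{1..k} - T. real i) \<le> real (card ({1..k} - T)) * ((real k + real j) / 2)"
proof -
  define U where "U = {1..<j} - T"
  have Pe: "{1..k} - T = {j..k} \<union> U" using T j unfolding U_def by auto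
  have disj: "{j..k} \<inter> U = {}" unfolding U_def by auto
  have fU: "finite U" unfolding U_def by auto
  have cP: "card ({1..k} - T) = (k + 1 - j) + card U" using Pe disj fU
    by (simp add: card_Un_disjoint)
  have sP: "(\<Sum>i\<in>{1..k} - T. real i) = (\<Sum>i\<in>{j..k}. real i) + (\<Sum>i\<in>U. real i)"
    using Pe disj fU by (simp add: sum.union_disjoint)
  have g: "2 * (\<Sum>i\<in>{j..k}. real i) = (real (k - j) + 1) * (2 * real j + real (k - j))"
    using gs2[of j "k - j"] j by simp
  have sU: "(\<Sum>i\<in>U. real i) \<le> real (card U) * (real j - 1)"
    using sum_bounded_above[of U "\<lambda>i. real i" "real j - 1"] unfolding U_def by fastforce
  have "real (card U) * (real j - 1) \<le> real (card U) * ((real k + real j) / 2)"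
    using j by (intro mult_left_mono) auto
  then have h2: "(\<Sum>i\<in>U. real i) \<le> real (card U) * ((real k + real j) / 2)" using sU by linarith
  have h0: "real (card ({1..k} - T)) = (real k + 1 - real j) + real (card U)" using cP j by simp
  have h3: "(\<Sum>i\<in>{j..k}. real i) = (real k + 1 - real j) * ((real k + real j) / 2)"
    using g j by (simp add: of_nat_diff algebra_simps)
  have h4: "real (card ({1..k} - T)) * ((real k + real j) / 2)
      = (real k + 1 - real j) * ((real k + real j) / 2) + real (card U) * ((real k + real j) / 2)"
    unfolding h0 by (simp only: distrib_right)
  show ?thesis using sP h2 h3 h4 by linarith
qed

lemma column_bound:
  fixes c :: "nat \<Rightarrow> real" and \<psi>p :: "nat \<Rightarrow> nat"
  assumes bp: "bij_betw \<psi>p {1..n} {1..n}" and j: "1 \<le> j" "j \<le> k"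
    and cn: "\<forall>x\<in>{1..n}. 0 \<le> c x" and cs: "card {x\<in>{1..n}. c x \<noteq> 0} \<le> k"
  shows "guesswork n c \<le> (\<Sum>x\<in>{1..n}. (if \<psi>p x < j then real (\<psi>p x) else (real k + real j)/2) * c x)"
proof -
  let ?X = "{1..n::nat}"
  define a where "a x = (if \<psi>p x < j then real (\<psi>p x) else (real k + real j)/2)" for x
  define S where "S = {x\<in>?X. c x \<noteq> 0}"
  define ST where "ST = {x\<in>S. \<psi>p x < j}"
  define SR where "SR = {x\<in>S. j \<le> \<psi>p x}"
  define T where "T = \<psi>p ` ST"
  define P where "P = {1..k} - T"
  define L where "L = card P"
  have fS: "finite S" "finite ST" "finite SR" unfolding S_def ST_def SR_def by auto
  have psi1: "\<forall>x\<in>?X. 1 \<le> \<psi>p x" using bp bij_betwE by fastforce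
  have injp: "inj_on \<psi>p ?X" using bp bij_betw_def by blast
  have TT: "T \<subseteq> {1..<j}" unfolding T_def ST_def S_def using psi1 by auto
  have cT: "card T = card ST"
    unfolding T_def using injp by (intro card_image) (auto intro: inj_on_subset simp: ST_def S_def)
  have cL: "L = k - card T"
  proof -
    have "T \<subseteq> {1..k}" using TT j by auto
    moreover have "finite T" using TT finite_subset by blast
    ultimately show ?thesis unfolding L_def P_def by (simp add: card_Diff_subset)
  qed
  have cSR: "card SR \<le> L"
  proof -
    have "S = ST \<union> SR" "ST \<inter> SR = {}" unfolding ST_def SR_def by auto
    then have "card S = card ST + card SR" using fS by (simp add: card_Un_disjoint)
    then show ?thesis using cs cL cT unfolding S_def by linarith
  qed
  have aval: "a x * c x = real (\<psi>p x) * c x" if "x \<in> ?X" "x \<notin> SR" for x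
  proof (cases "c x = 0")
    case False
    then have "\<psi>p x < j" using that unfolding SR_def S_def by auto
    then show ?thesis unfolding a_def by simp
  qed simp
  show ?thesis
  proof (cases "L = 0")
    case True
    then have SR0: "SR = {}" using cSR fS by auto
    have "guesswork n c \<le> (\<Sum>x\<in>?X. real (\<psi>p x) * c x)"
      using cn psi1 by (intro G_upper) (auto intro: inj_on_subset[OF injp])
    also have "\<dots> = (\<Sum>x\<in>?X. a x * c x)"
    proof (rule sum.cong[OF refl])
      fix x assume "x \<in> ?X"
      moreover have "x \<notin> SR" using SR0 by simp
      ultimately have "a x * c x = real (\<psi>p x) * c x" using aval[of x] by blast
      then show "real (\<psi>p x) * c x = a x * c x" by (rule sym)
    qed
    finally show ?thesis unfolding a_def .
  next
    case False
    then have L0: "0 < L" by simp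
    obtain e where e: "bij_betw e SR {0..<card SR}" using ex_bij_betw_finite_nat[OF fS(3)] by blast
    obtain f where f: "bij_betw f {0..<L} P"
      using ex_bij_betw_nat_finite[of P] unfolding L_def P_def by auto
    define \<phi> where "\<phi> u x = (if \<psi>p x < j then \<psi>p x else if x \<in> SR then f ((e x + u) mod L) else 1)" for u x
    have fP: "f v \<in> P" if "v < L" for v using f that bij_betwE by fastforce
    have Pk: "P \<subseteq> {1..k}" unfolding P_def by auto
    have eL: "e x < L" if "x \<in> SR" for x using e that cSR bij_betwE by fastforce
    have each: "guesswork n c \<le> (\<Sum>x\<in>?X. real (\<phi> u x) * c x)" if u: "u < L" for u
    proof (rule G_upper)
      show "\<forall>x\<in>?X. 0 \<le> c x" by (rule cn)
      show "\<forall>x\<in>?X. 1 \<le> \<phi> u x"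
      proof
        fix x assume "x \<in> ?X"
        show "1 \<le> \<phi> u x"
        proof (cases "\<psi>p x < j")
          case True then show ?thesis using psi1 \<open>x \<in> ?X\<close> unfolding \<phi>_def by auto
        next
          case False
          have "f ((e x + u) mod L) \<in> P" using fP L0 by auto
          then show ?thesis using False Pk unfolding \<phi>_def by auto
        qed
      qed
      show "inj_on (\<phi> u) {x\<in>?X. c x \<noteq> 0}"
      proof (rule inj_onI)
        fix x y assume x: "x \<in> {x\<in>?X. c x \<noteq> 0}" and y: "y \<in> {x\<in>?X. c x \<noteq> 0}" and eq: "\<phi> u x = \<phi> u y"
        have xS: "x \<in> S" and yS: "y \<in> S" using x y unfolding S_def by auto
        have inT: "\<psi>p z \<in> T" if "z \<in> S" "\<psi>p z < j" for z unfolding T_def ST_def using that by auto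
        have inP: "f ((e z + u) mod L) \<in> P" for z using fP L0 by auto
        show "x = y"
        proof (cases "\<psi>p x < j"; cases "\<psi>p y < j")
          assume "\<psi>p x < j" "\<psi>p y < j"
          then have "\<psi>p x = \<psi>p y" using eq unfolding \<phi>_def by simp
          moreover have "x \<in> ?X" "y \<in> ?X" using x y by auto
          ultimately show "x = y" using injp inj_onD by metis
        next
          assume a1: "\<psi>p x < j" "\<not> \<psi>p y < j"
          then have "\<phi> u x \<in> T" "\<phi> u y \<in> P" using inT[OF xS] inP yS unfolding \<phi>_def SR_def by auto
          then show "x = y" using eq unfolding P_def by auto
        next
          assume a1: "\<not> \<psi>p x < j" "\<psi>p y < j"
          then have "\<phi> u y \<in> T" "\<phi> u x \<in> P" using inT[OF yS] inP xS unfolding \<phi>_def SR_def by auto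
          then show "x = y" using eq unfolding P_def by auto
        next
          assume a1: "\<not> \<psi>p x < j" "\<not> \<psi>p y < j"
          then have xR: "x \<in> SR" and yR: "y \<in> SR" using xS yS unfolding SR_def by auto
          then have "f ((e x + u) mod L) = f ((e y + u) mod L)" using eq a1 unfolding \<phi>_def by auto
          then have "(e x + u) mod L = (e y + u) mod L"
            using f L0 unfolding bij_betw_def inj_on_def by auto
          then have "e x = e y" using modinj eL xR yR by blast
          then show "x = y" using e xR yR unfolding bij_betw_def inj_on_def by auto
        qed
      qed
    qed
    have sumu: "(\<Sum>u<L. real (\<phi> u x)) * c x \<le> real L * (a x * c x)" if x: "x \<in> ?X" for x
    proof (cases "\<psi>p x < j")
      case True
      then show ?thesis unfolding \<phi>_def a_def by simp
    next
      case False
      show ?thesis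
      proof (cases "x \<in> SR")
        case True
        have "(\<Sum>u<L. real (\<phi> u x)) = (\<Sum>u\<in>{0..<L}. real (f ((e x + u) mod L)))"
          unfolding \<phi>_def using False True by (simp add: lessThan_atLeast0)
        also have "\<dots> = (\<Sum>v\<in>{0..<L}. real (f v))"
          by (rule sum.reindex_bij_betw[OF shift_bij[OF L0]])
        also have "\<dots> = (\<Sum>i\<in>P. real i)"
          by (rule sum.reindex_bij_betw[OF f])
        also have "\<dots> \<le> real L * ((real k + real j) / 2)"
          unfolding P_def L_def by (rule sumP_bound[OF TT j])
        finally have "(\<Sum>u<L. real (\<phi> u x)) \<le> real L * a x" unfolding a_def using False by simp
        then show ?thesis using cn x by (simp add: mult_right_mono mult.assoc[symmetric])
      next
        case False2: False
        then have "c x = 0" using False x unfolding SR_def S_def by auto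
        then show ?thesis by simp
      qed
    qed
    have "real L * guesswork n c = (\<Sum>u<L. guesswork n c)" by simp
    also have "\<dots> \<le> (\<Sum>u<L. \<Sum>x\<in>?X. real (\<phi> u x) * c x)" using each by (intro sum_mono) auto
    also have "\<dots> = (\<Sum>x\<in>?X. (\<Sum>u<L. real (\<phi> u x)) * c x)"
      by (subst sum.swap) (simp add: sum_distrib_right)
    also have "\<dots> \<le> (\<Sum>x\<in>?X. real L * (a x * c x))" using sumu by (intro sum_mono) auto
    also have "\<dots> = real L * (\<Sum>x\<in>?X. a x * c x)" by (simp add: sum_distrib_left)
    finally have "real L * guesswork n c \<le> real L * (\<Sum>x\<in>?X. a x * c x)" .
    then show ?thesis using L0 unfolding a_def by simp
  qed
qed

lemma has_sum_finsum:
  fixes f :: "nat \<Rightarrow> nat \<Rightarrow> real"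
  assumes "finite I" "\<forall>i\<in>I. (f i has_sum s i) A"
  shows "((\<lambda>y. \<Sum>i\<in>I. f i y) has_sum (\<Sum>i\<in>I. s i)) A"
  using assms
proof (induction I rule: finite_induct)
  case empty then show ?case by simp
next
  case (insert i I)
  then have "((\<lambda>y. f i y + (\<Sum>i\<in>I. f i y)) has_sum (s i + (\<Sum>i\<in>I. s i))) A"
    by (intro has_sum_add) auto
  then show ?case using insert by simp
qed

lemma G_nonneg:
  assumes "\<forall>x\<in>{1..n}. 0 \<le> q x"
  shows "0 \<le> guesswork n q"
proof -
  obtain \<psi> where "guesswork n q = (\<Sum>x\<in>{1..n}. real (\<psi> x) * q x)" using G_sorted by blast
  moreover have "0 \<le> (\<Sum>x\<in>{1..n}. real (\<psi> x) * q x)" using assms by (intro sum_nonneg) auto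
  ultimately show ?thesis by simp
qed

lemma term_eq:
  fixes p :: "nat \<Rightarrow> real" and W :: "nat \<Rightarrow> nat \<Rightarrow> real"
  assumes W0: "\<forall>x\<in>{1..n}. 0 \<le> W x y" and p0: "\<forall>x\<in>{1..n}. 0 < p x"
  shows "(if out_prob n p W y > 0 then out_prob n p W y * guesswork n (posterior n p W y) else 0)
       = guesswork n (\<lambda>x. p x * W x y)"
proof -
  let ?c = "\<lambda>x. p x * W x y"
  have c0: "\<forall>x\<in>{1..n}. 0 \<le> ?c x" using W0 p0 by (simp add: less_imp_le)
  have op: "out_prob n p W y = (\<Sum>x\<in>{1..n}. ?c x)" unfolding out_prob_def by simp
  show ?thesis
  proof (cases "out_prob n p W y > 0")
    case True
    let ?o = "out_prob n p W y"
    have "posterior n p W y = (\<lambda>x. (1 / ?o) * ?c x)"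
      unfolding posterior_def by (rule ext) simp
    then have "guesswork n (posterior n p W y) = (1 / ?o) * guesswork n ?c"
      using G_scale[OF c0, of "1 / ?o"] True by simp
    then show ?thesis using True by simp
  next
    case False
    then have "(\<Sum>x\<in>{1..n}. ?c x) = 0" using op sum_nonneg[of "{1..n}" ?c] c0 by simp
    then have "\<forall>x\<in>{1..n}. ?c x = 0" using sum_nonneg_eq_0_iff[of "{1..n}" ?c] c0 by simp
    then show ?thesis using False G_zero by simp
  qed
qed

lemma bound_value:
  fixes p :: "nat \<Rightarrow> real" and \<psi>p :: "nat \<Rightarrow> nat"
  assumes bp: "bij_betw \<psi>p {1..n} {1..n}" and dp: "\<forall>x\<in>{1..n}. desc_entry n p (\<psi>p x) = p x"
    and s1: "(\<Sum>x=1..n. p x) = 1" and j: "1 \<le> j" "j \<le> n"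
  shows "(\<Sum>x\<in>{1..n}. (if \<psi>p x < j then real (\<psi>p x) else (real k + real j)/2) * p x)
       = bound_term n k p j"
proof -
  let ?d = "desc_entry n p"
  let ?g = "\<lambda>i. (if i < j then real i else (real k + real j)/2) * ?d i"
  have "(\<Sum>x\<in>{1..n}. (if \<psi>p x < j then real (\<psi>p x) else (real k + real j)/2) * p x)
      = (\<Sum>x\<in>{1..n}. ?g (\<psi>p x))" using dp by (intro sum.cong) auto
  also have "\<dots> = (\<Sum>i\<in>{1..n}. ?g i)" by (rule sum.reindex_bij_betw[OF bp])
  also have "\<dots> = (\<Sum>i\<in>{1..j-1}. ?g i) + (\<Sum>i\<in>{j..n}. ?g i)"
  proof -
    have "{1..n} = {1..j-1} \<union> {j..n}" using j by auto
    then show ?thesis by (simp add: sum.union_disjoint)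
  qed
  also have "(\<Sum>i\<in>{1..j-1}. ?g i) = (\<Sum>i\<in>{1..j-1}. real i * ?d i)" using j by (intro sum.cong) auto
  also have "(\<Sum>i\<in>{j..n}. ?g i) = (real k + real j)/2 * (\<Sum>i\<in>{j..n}. ?d i)"
    by (simp add: sum_distrib_left)
  also have "(\<Sum>i\<in>{j..n}. ?d i) = 1 - (\<Sum>i\<in>{1..j-1}. ?d i)"
  proof -
    have "(\<Sum>i\<in>{1..n}. ?d i) = (\<Sum>x\<in>{1..n}. ?d (\<psi>p x))" by (rule sum.reindex_bij_betw[symmetric, OF bp])
    also have "\<dots> = 1" using dp s1 by simp
    finally have "(\<Sum>i\<in>{1..n}. ?d i) = 1" .
    moreover have "{1..n} = {1..j-1} \<union> {j..n}" using j by auto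
    ultimately show ?thesis by (simp add: sum.union_disjoint)
  qed
  finally show ?thesis unfolding bound_term_def by (simp add: algebra_simps)
qed

lemma upper:
  fixes p :: "nat \<Rightarrow> real" and \<psi>p :: "nat \<Rightarrow> nat" and W :: "nat \<Rightarrow> nat \<Rightarrow> real"
  assumes bp: "bij_betw \<psi>p {1..n} {1..n}" and dp: "\<forall>x\<in>{1..n}. desc_entry n p (\<psi>p x) = p x"
    and s1: "(\<Sum>x=1..n. p x) = 1" and j: "1 \<le> j" "j \<le> k" and kn: "k < n"
    and p0: "\<forall>x\<in>{1..n}. 0 < p x" and F: "feasible n k W"
  shows "cond_guesswork n p W \<le> bound_term n k p j"
proof -
  let ?X = "{1..n::nat}"
  define a where "a x = (if \<psi>p x < j then real (\<psi>p x) else (real k + real j)/2)" for x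
  define c where "c y x = p x * W x y" for y x
  define f where "f y = (if out_prob n p W y > 0 then out_prob n p W y * guesswork n (posterior n p W y) else 0)" for y
  define g where "g y = (\<Sum>x\<in>?X. a x * c y x)" for y
  have W0: "\<forall>x\<in>?X. \<forall>y. 0 \<le> W x y" and Ws: "\<forall>x\<in>?X. ((\<lambda>y. W x y) has_sum 1) UNIV"
    using F unfolding feasible_def is_channel_def by auto
  have fG: "f y = guesswork n (c y)" for y
    unfolding f_def c_def using term_eq[of n W y p] W0 p0 by simp
  have c0: "\<forall>x\<in>?X. 0 \<le> c y x" for y using W0 p0 unfolding c_def by (simp add: less_imp_le)
  have fg: "f y \<le> g y" for y
  proof -
    have sub: "{x\<in>?X. c y x \<noteq> 0} \<subseteq> preimage n W y"
      unfolding preimage_def c_def using W0 by (auto simp: less_le)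
    have "card {x\<in>?X. c y x \<noteq> 0} \<le> card (preimage n W y)"
      by (rule card_mono[OF _ sub]) (simp add: preimage_def)
    also have "\<dots> \<le> k" using F unfolding feasible_def by auto
    finally have "card {x\<in>?X. c y x \<noteq> 0} \<le> k" .
    then show ?thesis unfolding fG g_def a_def using column_bound[OF bp j c0] by blast
  qed
  have f0: "0 \<le> f y" for y unfolding fG using G_nonneg c0 by blast
  have gs: "(g has_sum (\<Sum>x\<in>?X. a x * p x)) UNIV"
  proof -
    have "((\<lambda>y. \<Sum>x\<in>?X. a x * c y x) has_sum (\<Sum>x\<in>?X. a x * p x * 1)) UNIV"
    proof (rule has_sum_finsum)
      show "\<forall>x\<in>?X. ((\<lambda>y. a x * c y x) has_sum a x * p x * 1) UNIV"
      proof
        fix x assume "x \<in> ?X"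
        then have "((\<lambda>y. (a x * p x) * W x y) has_sum (a x * p x) * 1) UNIV"
          using Ws by (intro has_sum_cmult_right) auto
        then show "((\<lambda>y. a x * c y x) has_sum a x * p x * 1) UNIV" unfolding c_def by (simp add: mult.assoc)
      qed
    qed simp
    then show ?thesis unfolding g_def by simp
  qed
  have fs: "f summable_on UNIV"
    using summable_on_comparison_test[of g UNIV f] gs fg f0 by (auto simp: has_sum_iff)
  have "cond_guesswork n p W = infsum f UNIV" unfolding cond_guesswork_def f_def by simp
  also have "\<dots> \<le> infsum g UNIV" using fs gs fg by (intro infsum_mono) (auto simp: has_sum_iff)
  also have "\<dots> = (\<Sum>x\<in>?X. a x * p x)" using gs by (simp add: has_sum_iff)
  also have "\<dots> = bound_term n k p j" unfolding a_def using bound_value[OF bp dp s1] j kn by simp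
  finally show ?thesis .
qed

lemma col_exact:
  fixes p c :: "nat \<Rightarrow> real" and \<psi>p :: "nat \<Rightarrow> nat"
  assumes bp: "bij_betw \<psi>p {1..n} {1..n}" and cp: "compat n \<psi>p p"
    and p0: "\<forall>x\<in>{1..n}. 0 < p x" and j: "1 \<le> j" "j \<le> k" and kn: "k < n"
    and S: "S \<subseteq> {x\<in>{1..n}. j \<le> \<psi>p x}" "card S = k + 1 - j"
    and \<mu>: "0 \<le> \<mu>" and \<kappa>: "0 \<le> \<kappa>" and cond: "\<forall>x\<in>{1..n}. \<psi>p x < j \<longrightarrow> \<mu> \<le> \<kappa> * p x"
    and c: "\<forall>x\<in>{1..n}. c x = (if \<psi>p x < j then \<kappa> * p x else if x \<in> S then \<mu> else 0)"
  shows "guesswork n c = (\<Sum>x\<in>{1..n}. (if \<psi>p x < j then real (\<psi>p x) else (real k + real j)/2) * c x)"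
proof -
  let ?X = "{1..n::nat}"
  define s where "s = k + 1 - j"
  define a where "a x = (if \<psi>p x < j then real (\<psi>p x) else (real k + real j)/2)" for x
  define R where "R = {x\<in>?X. j \<le> \<psi>p x}"
  define Ot where "Ot = R - S"
  have fS: "finite S" "finite Ot" "finite R" using S unfolding Ot_def R_def by (auto intro: finite_subset)
  have injp: "inj_on \<psi>p ?X" using bp bij_betw_def by blast
  have psiX: "\<psi>p x \<in> ?X" if "x \<in> ?X" for x using bp that bij_betwE by blast
  have cR: "card R = n + 1 - j"
  proof -
    have "\<psi>p ` R = {j..n}"
    proof
      show "\<psi>p ` R \<subseteq> {j..n}" unfolding R_def using psiX by auto
      show "{j..n} \<subseteq> \<psi>p ` R"
      proof
        fix i assume i: "i \<in> {j..n}"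
        then have "i \<in> ?X" using j by auto
        then obtain x where "x \<in> ?X" "\<psi>p x = i" using bp by (metis bij_betw_def imageE)
        then show "i \<in> \<psi>p ` R" unfolding R_def using i by auto
      qed
    qed
    moreover have "inj_on \<psi>p R" using injp unfolding R_def by (auto intro: inj_on_subset)
    ultimately have "card R = card {j..n}" by (metis card_image)
    then show ?thesis by simp
  qed
  have cO: "card Ot = n - k"
  proof -
    have "S \<subseteq> R" using S unfolding R_def by simp
    then have "card Ot = card R - card S" unfolding Ot_def using fS by (simp add: card_Diff_subset)
    then show ?thesis using cR S(2) j kn by simp
  qed
  obtain e where e: "bij_betw e S {0..<s}" using ex_bij_betw_finite_nat[OF fS(1)] S(2) s_def by auto
  obtain e' where e': "bij_betw e' Ot {0..<n-k}" using ex_bij_betw_finite_nat[OF fS(2)] cO by auto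
  have eS: "e x < s" if "x \<in> S" for x using e that bij_betwE by fastforce
  have eO: "e' x < n - k" if "x \<in> Ot" for x using e' that bij_betwE by fastforce
  define \<psi> where "\<psi> x = (if \<psi>p x < j then \<psi>p x else if x \<in> S then j + e x else k + 1 + e' x)" for x
  have reg: "x \<in> ?X \<Longrightarrow> \<psi>p x < j \<or> x \<in> S \<or> x \<in> Ot" for x unfolding Ot_def R_def by auto
  have SR: "x \<in> S \<Longrightarrow> j \<le> \<psi>p x" for x using S by auto
  have OR: "x \<in> Ot \<Longrightarrow> j \<le> \<psi>p x \<and> x \<notin> S" for x unfolding Ot_def R_def by auto
  have rT: "\<psi> x = \<psi>p x" "1 \<le> \<psi> x" "\<psi> x < j" if "x \<in> ?X" "\<psi>p x < j" for x
    using that psiX[of x] unfolding \<psi>_def by auto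
  have rS: "\<psi> x = j + e x" "j \<le> \<psi> x" "\<psi> x \<le> k" if "x \<in> S" for x
    using that SR[of x] eS[of x] unfolding \<psi>_def s_def by auto
  have rO: "\<psi> x = k + 1 + e' x" "k < \<psi> x" "\<psi> x \<le> n" if "x \<in> Ot" for x
    using that OR[of x] eO[of x] kn unfolding \<psi>_def by auto
  have lowj: "j \<le> \<psi> y" if "y \<in> ?X" "\<not> \<psi>p y < j" for y
  proof -
    have "y \<in> S \<or> y \<in> Ot" using reg[OF that(1)] that(2) by auto
    then show ?thesis using rS(2)[of y] rO(2)[of y] j by auto
  qed
  have lowk: "k < \<psi> y" if "y \<in> ?X" "\<not> \<psi>p y < j" "y \<notin> S" for y
  proof -
    have "y \<in> Ot" using reg[OF that(1)] that(2,3) by auto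
    then show ?thesis using rO(2)[of y] by auto
  qed
  have inj: "inj_on \<psi> ?X"
  proof (rule inj_onI)
    fix x y assume x: "x \<in> ?X" and y: "y \<in> ?X" and eq: "\<psi> x = \<psi> y"
    show "x = y"
    proof (cases "\<psi>p x < j")
      case True
      then have "\<psi> y < j" using eq rT[OF x] by simp
      then have yT: "\<psi>p y < j" using lowj[OF y] by (meson not_le)
      then have "\<psi>p x = \<psi>p y" using eq rT[OF x True] rT[OF y yT] by simp
      then show ?thesis using injp x y inj_onD by metis
    next
      case F1: False
      show ?thesis
      proof (cases "x \<in> S")
        case True
        then have "\<psi> y \<le> k" "j \<le> \<psi> y" using eq rS[OF True] by auto
        then have yT: "\<not> \<psi>p y < j" using rT(3)[OF y] by (meson not_le)
        then have yS: "y \<in> S" using lowk[OF y yT] \<open>\<psi> y \<le> k\<close> by (meson not_le)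
        then have "e x = e y" using eq rS(1)[OF True] rS(1)[OF yS] by simp
        then show ?thesis using e True yS unfolding bij_betw_def inj_on_def by blast
      next
        case False
        then have xO: "x \<in> Ot" using reg[OF x] F1 by auto
        then have "k < \<psi> y" using eq rO(2)[OF xO] by simp
        then have yT: "\<not> \<psi>p y < j" using rT(3)[OF y] j by fastforce
        have yS: "y \<notin> S" using rS(3)[of y] \<open>k < \<psi> y\<close> by fastforce
        have yO: "y \<in> Ot" using reg[OF y] yT yS by auto
        then have "e' x = e' y" using eq rO(1)[OF xO] rO(1)[OF yO] by simp
        then show ?thesis using e' xO yO unfolding bij_betw_def inj_on_def by blast
      qed
    qed
  qed
  have rng: "\<psi> ` ?X \<subseteq> ?X"
  proof
    fix i assume "i \<in> \<psi> ` ?X"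
    then obtain x where x: "x \<in> ?X" "i = \<psi> x" by auto
    show "i \<in> ?X" using reg[OF x(1)] rT[OF x(1)] rS rO x(2) j kn by fastforce
  qed
  have b: "bij_betw \<psi> ?X ?X" by (rule bij_from_inj[OF inj rng])
  have c0: "\<forall>x\<in>?X. 0 \<le> c x" using c p0 \<mu> \<kappa> by (auto simp: less_imp_le)
  have cpt: "compat n \<psi> c"
    unfolding compat_def
  proof (intro ballI impI)
    fix x y assume x: "x \<in> ?X" and y: "y \<in> ?X" and lt: "\<psi> x < \<psi> y"
    show "c y \<le> c x"
    proof (cases "\<psi>p x < j")
      case xT: True
      show ?thesis
      proof (cases "\<psi>p y < j")
        case True
        then have "p y \<le> p x" using cp x y lt rT[OF x xT] rT[OF y True] unfolding compat_def by auto
        then show ?thesis using c x y xT True \<kappa> by (simp add: mult_left_mono)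
      next
        case False
        then have "c y \<le> \<mu>" using c y \<mu> by auto
        also have "\<mu> \<le> c x" using cond c x xT by auto
        finally show ?thesis .
      qed
    next
      case xnT: False
      show ?thesis
      proof (cases "x \<in> S")
        case xS: True
        then have "\<not> \<psi>p y < j" using lt rS rT[OF y] by fastforce
        then show ?thesis using c x y xS xnT \<mu> by auto
      next
        case False
        then have xO: "x \<in> Ot" using reg[OF x] xnT by auto
        then have ky: "k < \<psi> y" using lt rO(2)[OF xO] by simp
        have "\<not> \<psi>p y < j" using rT(3)[OF y] ky j by fastforce
        moreover have "y \<notin> S" using rS(3)[of y] ky by fastforce
        ultimately have "y \<in> Ot" using reg[OF y] by auto
        then have "\<not> \<psi>p y < j" "y \<notin> S" using OR[of y] by auto
        moreover have "x \<notin> S" using OR xO by auto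
        ultimately show ?thesis using c x y xnT by simp
      qed
    qed
  qed
  have G: "guesswork n c = (\<Sum>x\<in>?X. real (\<psi> x) * c x)" by (rule G_exact[OF c0 b cpt])
  have "(\<Sum>x\<in>?X. real (\<psi> x) * c x) - (\<Sum>x\<in>?X. a x * c x) = (\<Sum>x\<in>?X. (real (\<psi> x) - a x) * c x)"
    by (simp add: sum_subtractf left_diff_distrib)
  also have "\<dots> = (\<Sum>x\<in>S. (real (\<psi> x) - a x) * c x)"
  proof (rule sum.mono_neutral_right)
    show "finite ?X" by simp
    show "S \<subseteq> ?X" using S by auto
    show "\<forall>x\<in>?X - S. (real (\<psi> x) - a x) * c x = 0"
    proof
      fix x assume x: "x \<in> ?X - S"
      show "(real (\<psi> x) - a x) * c x = 0"
      proof (cases "\<psi>p x < j")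
        case True then show ?thesis using rT[of x] x unfolding a_def by simp
      next
        case False then show ?thesis using c x by auto
      qed
    qed
  qed
  also have "\<dots> = (\<Sum>x\<in>S. (real (j + e x) - (real k + real j)/2) * \<mu>)"
  proof (rule sum.cong[OF refl])
    fix x assume x: "x \<in> S"
    then have "x \<in> ?X" "\<not> \<psi>p x < j" using S SR by auto
    then show "(real (\<psi> x) - a x) * c x = (real (j + e x) - (real k + real j)/2) * \<mu>"
      using rS[OF x] c x unfolding a_def by auto
  qed
  also have "\<dots> = (\<Sum>i\<in>{0..<s}. (real (j + i) - (real k + real j)/2) * \<mu>)"
    by (rule sum.reindex_bij_betw[OF e])
  also have "\<dots> = \<mu> * (real s * real j + (\<Sum>i<s. real i) - real s * ((real k + real j)/2))"
    by (simp add: sum_distrib_left sum.distrib sum_subtractf algebra_simps atLeast0LessThan)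
  also have "\<dots> = 0"
  proof -
    have g2: "2 * (\<Sum>i<s. real i) = real s * (real s - 1)" by (rule gs)
    have hs: "real s = real k + 1 - real j" unfolding s_def using j by (simp add: of_nat_diff)
    have e1: "2 * (real s * real j + (\<Sum>i<s. real i) - real s * ((real k + real j)/2))
        = real s * (real j + real s - 1 - real k)"
    proof -
      have "2 * (real s * real j + (\<Sum>i<s. real i) - real s * ((real k + real j)/2))
          = 2 * (real s * real j) + 2 * (\<Sum>i<s. real i) - real s * (real k + real j)" by simp
      also have "\<dots> = 2 * (real s * real j) + real s * (real s - 1) - real s * (real k + real j)"
        using g2 by simp
      also have "\<dots> = real s * (real j + real s - 1 - real k)" by (simp add: algebra_simps)
      finally show ?thesis .
    qed
    have "real j + real s - 1 - real k = 0" using hs by simp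
    then have "real s * real j + (\<Sum>i<s. real i) - real s * ((real k + real j)/2) = 0"
      using e1 by simp
    then show ?thesis by simp
  qed
  finally show ?thesis using G unfolding a_def by simp
qed

lemma choose_j:
  fixes d :: "nat \<Rightarrow> real"
  assumes k: "0 < k" "k < n" and dpos: "\<forall>i\<in>{1..n}. 0 < d i"
    and anti: "\<forall>i\<in>{1..n}. \<forall>i'\<in>{1..n}. i \<le> i' \<longrightarrow> d i' \<le> d i"
  shows "\<exists>j. 1 \<le> j \<and> j \<le> k \<and> real (k + 1 - j) * d j \<le> (\<Sum>i\<in>{j..n}. d i)
            \<and> (\<forall>i\<in>{1..<j}. (\<Sum>i\<in>{j..n}. d i) \<le> real (k + 1 - j) * d i)"
proof -
  define P where "P j \<longleftrightarrow> 1 \<le> j \<and> real (k + 1 - j) * d j \<le> (\<Sum>i\<in>{j..n}. d i)" for j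
  have Pk: "P k"
  proof -
    have "d k \<le> (\<Sum>i\<in>{k..n}. d i)"
      using dpos k by (intro member_le_sum) (auto simp: less_imp_le)
    then show ?thesis unfolding P_def using k by simp
  qed
  obtain j where Pj: "P j" and least: "\<forall>i<j. \<not> P i"
    using exists_least_iff[of P] Pk by blast
  have jk: "j \<le> k" using least Pk by (meson not_le)
  have j1: "1 \<le> j" using Pj P_def by simp
  have rest: "(\<Sum>i\<in>{j..n}. d i) \<le> real (k + 1 - j) * d i" if i: "i \<in> {1..<j}" for i
  proof -
    have nP: "\<not> P (j - 1)" using least j1 i by auto
    have j2: "2 \<le> j" using i by auto
    have "real (k + 1 - (j - 1)) * d (j - 1) > (\<Sum>i\<in>{j - 1..n}. d i)"
      using nP j2 unfolding P_def by auto
    moreover have "(\<Sum>i\<in>{j - 1..n}. d i) = d (j - 1) + (\<Sum>i\<in>{j..n}. d i)"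
    proof -
      have "{j - 1..n} = insert (j - 1) {j..n}" using j2 jk k by auto
      moreover have "j - 1 \<notin> {j..n}" using j2 by auto
      ultimately show ?thesis by (simp add: sum.insert)
    qed
    moreover have "real (k + 1 - (j - 1)) = real (k + 1 - j) + 1" using jk j2 by simp
    ultimately have "(\<Sum>i\<in>{j..n}. d i) < real (k + 1 - j) * d (j - 1)" by (simp add: algebra_simps)
    also have "\<dots> \<le> real (k + 1 - j) * d i"
    proof (rule mult_left_mono)
      have "i \<in> {1..n}" "j - 1 \<in> {1..n}" "i \<le> j - 1" using i jk k j2 by auto
      then show "d (j - 1) \<le> d i" using anti by blast
    qed simp
    finally show ?thesis by simp
  qed
  show ?thesis using Pj jk j1 rest unfolding P_def by blast
qed

lemma cover_nth: "cover L x = (\<Sum>y<length L. if x \<in> fst (L ! y) then snd (L ! y) else 0)"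
  unfolding cover_def by (simp add: sum_list_sum_nth atLeast0LessThan)

lemma total_nth: "total L = (\<Sum>y<length L. snd (L ! y))"
  unfolding total_def by (simp add: sum_list_sum_nth atLeast0LessThan)

lemma card_low:
  assumes bp: "bij_betw \<psi>p {1..n} {1..n}" and j: "1 \<le> j" "j \<le> n + 1"
  shows "card {x\<in>{1..n}. \<psi>p x < j} = j - 1"
proof -
  let ?T = "{x\<in>{1..n}. \<psi>p x < j}"
  have "\<psi>p ` ?T = {1..<j}"
  proof
    show "\<psi>p ` ?T \<subseteq> {1..<j}" using bp bij_betwE by fastforce
    show "{1..<j} \<subseteq> \<psi>p ` ?T"
    proof
      fix i assume i: "i \<in> {1..<j}"
      then have "i \<in> {1..n}" using j by auto
      then obtain x where "x \<in> {1..n}" "\<psi>p x = i" using bp by (metis bij_betw_def imageE)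
      then show "i \<in> \<psi>p ` ?T" using i by auto
    qed
  qed
  moreover have "inj_on \<psi>p ?T" using bp unfolding bij_betw_def by (auto intro: inj_on_subset)
  ultimately have "card ?T = card {1..<j}" by (metis card_image)
  then show ?thesis by simp
qed

lemma achieve:
  fixes p :: "nat \<Rightarrow> real" and \<psi>p :: "nat \<Rightarrow> nat"
  assumes bp: "bij_betw \<psi>p {1..n} {1..n}" and cp: "compat n \<psi>p p"
    and p0: "\<forall>x\<in>{1..n}. 0 < p x" and j: "1 \<le> j" "j \<le> k" and kn: "k < n"
    and r_def: "r = (\<Sum>x\<in>{x\<in>{1..n}. j \<le> \<psi>p x}. p x)" and r0: "0 < r"
    and c1: "\<forall>x\<in>{1..n}. j \<le> \<psi>p x \<longrightarrow> real (k + 1 - j) * p x \<le> r"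
    and c2: "\<forall>x\<in>{1..n}. \<psi>p x < j \<longrightarrow> r \<le> real (k + 1 - j) * p x"
  shows "\<exists>W. feasible n k W \<and> cond_guesswork n p W
            = (\<Sum>x\<in>{1..n}. (if \<psi>p x < j then real (\<psi>p x) else (real k + real j)/2) * p x)"
proof -
  let ?X = "{1..n::nat}"
  define a where "a x = (if \<psi>p x < j then real (\<psi>p x) else (real k + real j)/2)" for x
  define s where "s = k + 1 - j"
  have s1: "1 \<le> s" using j unfolding s_def by simp
  have sr: "0 < real s" using s1 by simp
  define R where "R = {x\<in>?X. j \<le> \<psi>p x}"
  define Tp where "Tp = {x\<in>?X. \<psi>p x < j}"
  define M where "M = r / real s"
  have finR: "finite R" unfolding R_def by simp
  have pM: "\<forall>x\<in>R. p x \<le> M"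
    using c1 sr unfolding R_def M_def s_def by (auto simp: pos_le_divide_eq mult.commute)
  have sM: "real s * M = sum p R" unfolding M_def R_def r_def using sr by simp
  have M0: "0 \<le> M" unfolding M_def using r0 sr by simp
  obtain Ls where LsP: "\<forall>Sm\<in>set Ls. fst Sm \<subseteq> R \<and> card (fst Sm) = s \<and> 0 \<le> snd Sm"
    and Lcov: "\<forall>x\<in>R. cover Ls x = p x" and Ltot: "total Ls = M"
    using decomp[OF finR _ pM sM M0] p0 unfolding R_def by (auto simp: less_imp_le)
  define N where "N = length Ls"
  define S where "S y = fst (Ls ! y)" for y
  define \<mu> where "\<mu> y = snd (Ls ! y)" for y
  have SP: "S y \<subseteq> R" "card (S y) = s" "0 \<le> \<mu> y" if "y < N" for y
    using LsP nth_mem[of y Ls] that unfolding N_def S_def \<mu>_def by auto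
  have cov: "(\<Sum>y<N. if x \<in> S y then \<mu> y else 0) = p x" if "x \<in> R" for x
    using Lcov that unfolding cover_nth N_def S_def \<mu>_def by simp
  have tot: "(\<Sum>y<N. \<mu> y) = M" using Ltot unfolding total_nth N_def \<mu>_def by simp
  define \<kappa> where "\<kappa> y = \<mu> y * real s / r" for y
  define W where "W x y = (if y < N then (if \<psi>p x < j then \<kappa> y else if x \<in> S y then \<mu> y / p x else 0) else 0)" for x y
  have W0: "\<forall>x\<in>?X. 0 \<le> W x y" for y
    using SP p0 r0 unfolding W_def \<kappa>_def by (auto simp: less_imp_le)
  have Wsum: "(\<Sum>y<N. W x y) = 1" if x: "x \<in> ?X" for x
  proof (cases "\<psi>p x < j")
    case True
    then have "(\<Sum>y<N. W x y) = (\<Sum>y<N. \<mu> y * real s / r)" unfolding W_def \<kappa>_def by simp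
    also have "\<dots> = (\<Sum>y<N. \<mu> y) * real s / r" by (simp add: sum_distrib_right sum_divide_distrib)
    also have "\<dots> = 1" using tot sr r0 unfolding M_def by simp
    finally show ?thesis .
  next
    case False
    then have xR: "x \<in> R" using x unfolding R_def by auto
    have "(\<Sum>y<N. W x y) = (\<Sum>y<N. (if x \<in> S y then \<mu> y else 0) / p x)"
      unfolding W_def using False by (intro sum.cong) auto
    also have "\<dots> = (\<Sum>y<N. if x \<in> S y then \<mu> y else 0) / p x" by (simp add: sum_divide_distrib)
    also have "\<dots> = 1"
    proof -
      have "p x \<noteq> 0" using p0 x by (metis less_irrefl)
      then show ?thesis using cov[OF xR] by simp
    qed
    finally show ?thesis .
  qed
  have Whs: "((\<lambda>y. W x y) has_sum 1) UNIV" if x: "x \<in> ?X" for x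
    by (rule has_sum_finite_neutralI[of "{..<N}"]) (use Wsum[OF x] in \<open>auto simp: W_def\<close>)
  have cTp: "card Tp = j - 1" unfolding Tp_def by (rule card_low[OF bp]) (use j kn in auto)
  have pre: "card (preimage n W y) \<le> k" for y
  proof (cases "y < N")
    case True
    have "preimage n W y \<subseteq> Tp \<union> S y"
      unfolding preimage_def W_def Tp_def using True by auto
    moreover have "finite (S y)" using SP(1)[OF True] finR finite_subset by blast
    ultimately have "card (preimage n W y) \<le> card (Tp \<union> S y)"
      by (intro card_mono) (auto simp: Tp_def)
    also have "\<dots> \<le> card Tp + card (S y)" by (rule card_Un_le)
    also have "\<dots> = k" using cTp SP(2)[OF True] j unfolding s_def by simp
    finally show ?thesis .
  next
    case False
    then have "preimage n W y = {}" unfolding preimage_def W_def by auto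
    then show ?thesis by simp
  qed
  have feas: "feasible n k W"
    unfolding feasible_def is_channel_def using W0 Whs pre by auto
  define c where "c y x = p x * W x y" for y x
  define f where "f y = (if out_prob n p W y > 0 then out_prob n p W y * guesswork n (posterior n p W y) else 0)" for y
  have fG: "f y = guesswork n (c y)" for y
    unfolding f_def c_def using term_eq[of n W y p] W0 p0 by simp
  have fzero: "f y = 0" if "y \<notin> {..<N}" for y
  proof -
    have "\<forall>x\<in>?X. c y x = 0" using that unfolding c_def W_def by auto
    then show ?thesis unfolding fG by (rule G_zero)
  qed
  have fval: "f y = (\<Sum>x\<in>?X. a x * c y x)" if y: "y < N" for y
  proof -
    have cond: "\<forall>x\<in>?X. \<psi>p x < j \<longrightarrow> \<mu> y \<le> \<kappa> y * p x"
    proof (intro ballI impI)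
      fix x assume x: "x \<in> ?X" and xT: "\<psi>p x < j"
      have "1 \<le> real s * p x / r" using c2 x xT r0 unfolding s_def by simp
      then have "\<mu> y * 1 \<le> \<mu> y * (real s * p x / r)" using SP(3)[OF y] by (intro mult_left_mono)
      then show "\<mu> y \<le> \<kappa> y * p x" unfolding \<kappa>_def by simp
    qed
    have ceq: "\<forall>x\<in>?X. c y x = (if \<psi>p x < j then \<kappa> y * p x else if x \<in> S y then \<mu> y else 0)"
      using y p0 unfolding c_def W_def by auto
    have k0: "0 \<le> \<kappa> y" using SP(3)[OF y] r0 unfolding \<kappa>_def by simp
    show ?thesis unfolding fG a_def
      by (rule col_exact[OF bp cp p0 j kn _ _ SP(3)[OF y] k0 cond ceq])
         (use SP(1,2)[OF y] in \<open>auto simp: R_def s_def\<close>)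
  qed
  have "(f has_sum (\<Sum>y<N. f y)) UNIV"
    by (rule has_sum_finite_neutralI) (use fzero in auto)
  then have "cond_guesswork n p W = (\<Sum>y<N. f y)"
    unfolding cond_guesswork_def f_def by (simp add: has_sum_iff)
  also have "\<dots> = (\<Sum>y<N. \<Sum>x\<in>?X. a x * c y x)" using fval by simp
  also have "\<dots> = (\<Sum>x\<in>?X. a x * (p x * (\<Sum>y<N. W x y)))"
    by (subst sum.swap) (simp add: c_def sum_distrib_left)
  also have "\<dots> = (\<Sum>x\<in>?X. a x * p x)" using Wsum by simp
  finally show ?thesis using feas unfolding a_def by blast
qed

theorem corollary3:
  fixes n k :: nat and p :: "nat \<Rightarrow> real"
  assumes "0 < k" and "k < n"
    and "\<forall>x\<in>{1..n}. p x > 0"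
    and "(\<Sum>x=1..n. p x) = 1"
  shows "(\<exists>W. feasible n k W \<and> cond_guesswork n p W = Min (bound_term n k p ` {1..k}))
       \<and> (\<forall>W. feasible n k W \<longrightarrow> cond_guesswork n p W \<le> Min (bound_term n k p ` {1..k}))"
proof -
  note k0 = assms(1) and kn = assms(2) and p0 = assms(3) and s1 = assms(4)
  let ?X = "{1..n::nat}"
  obtain \<psi>p where bp: "bij_betw \<psi>p ?X ?X" and cp: "compat n \<psi>p p"
    and dp: "\<forall>x\<in>?X. desc_entry n p (\<psi>p x) = p x"
    using sorting_exists by blast
  define d where "d = desc_entry n p"
  have pre: "\<exists>x\<in>?X. \<psi>p x = i" if "i \<in> ?X" for i
    using bp that by (metis bij_betw_def imageE)
  have dpos: "\<forall>i\<in>?X. 0 < d i"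
  proof
    fix i assume "i \<in> ?X"
    then obtain x where "x \<in> ?X" "\<psi>p x = i" using pre by blast
    then show "0 < d i" using dp p0 unfolding d_def by auto
  qed
  have anti: "\<forall>i\<in>?X. \<forall>i'\<in>?X. i \<le> i' \<longrightarrow> d i' \<le> d i"
  proof (intro ballI impI)
    fix i i' assume i: "i \<in> ?X" and i': "i' \<in> ?X" and le: "i \<le> i'"
    show "d i' \<le> d i"
    proof (cases "i = i'")
      case False
      obtain x where x: "x \<in> ?X" "\<psi>p x = i" using pre i by blast
      obtain x' where x': "x' \<in> ?X" "\<psi>p x' = i'" using pre i' by blast
      have "p x' \<le> p x" using cp x x' le False unfolding compat_def by auto
      then show ?thesis using dp x x' unfolding d_def by auto
    qed simp
  qed
  obtain j where j: "1 \<le> j" "j \<le> k" and jc1: "real (k + 1 - j) * d j \<le> (\<Sum>i\<in>{j..n}. d i)"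
    and jc2: "\<forall>i\<in>{1..<j}. (\<Sum>i\<in>{j..n}. d i) \<le> real (k + 1 - j) * d i"
    using choose_j[OF k0 kn dpos anti] by blast
  define r where "r = (\<Sum>x\<in>{x\<in>?X. j \<le> \<psi>p x}. p x)"
  have rd: "r = (\<Sum>i\<in>{j..n}. d i)"
  proof -
    have "r = (\<Sum>x\<in>?X. if j \<le> \<psi>p x then p x else 0)" unfolding r_def by (rule sum.inter_filter) simp
    also have "\<dots> = (\<Sum>x\<in>?X. (\<lambda>i. if j \<le> i then d i else 0) (\<psi>p x))"
      using dp unfolding d_def by (intro sum.cong) auto
    also have "\<dots> = (\<Sum>i\<in>?X. if j \<le> i then d i else 0)" by (rule sum.reindex_bij_betw[OF bp])
    also have "\<dots> = (\<Sum>i\<in>{i\<in>?X. j \<le> i}. d i)" by (rule sum.inter_filter[symmetric]) simp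
    also have "{i\<in>?X. j \<le> i} = {j..n}" using j by auto
    finally show ?thesis .
  qed
  have c1: "\<forall>x\<in>?X. j \<le> \<psi>p x \<longrightarrow> real (k + 1 - j) * p x \<le> r"
  proof (intro ballI impI)
    fix x assume x: "x \<in> ?X" and jx: "j \<le> \<psi>p x"
    have px: "\<psi>p x \<in> ?X" using bp x bij_betwE by blast
    have "d (\<psi>p x) \<le> d j" using anti px jx j by auto
    then have "real (k + 1 - j) * d (\<psi>p x) \<le> real (k + 1 - j) * d j" by (intro mult_left_mono) auto
    then show "real (k + 1 - j) * p x \<le> r" using jc1 rd dp x unfolding d_def by simp
  qed
  have c2: "\<forall>x\<in>?X. \<psi>p x < j \<longrightarrow> r \<le> real (k + 1 - j) * p x"
  proof (intro ballI impI)
    fix x assume x: "x \<in> ?X" and jx: "\<psi>p x < j"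
    have px: "\<psi>p x \<in> ?X" using bp x bij_betwE by blast
    then have "\<psi>p x \<in> {1..<j}" using jx by auto
    then have "r \<le> real (k + 1 - j) * d (\<psi>p x)" using jc2 rd by blast
    then show "r \<le> real (k + 1 - j) * p x" using dp x unfolding d_def by simp
  qed
  have r0: "0 < r"
  proof -
    have "d n \<le> (\<Sum>i\<in>{j..n}. d i)"
      using dpos j kn by (intro member_le_sum) (auto simp: less_imp_le)
    moreover have "0 < d n" using dpos kn k0 by auto
    ultimately show ?thesis using rd by simp
  qed
  obtain W where F: "feasible n k W"
    and cW: "cond_guesswork n p W = (\<Sum>x\<in>?X. (if \<psi>p x < j then real (\<psi>p x) else (real k + real j)/2) * p x)"
    using achieve[OF bp cp p0 j kn r_def r0 c1 c2] by blast
  have cWb: "cond_guesswork n p W = bound_term n k p j"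
    using cW bound_value[OF bp dp s1] j kn by simp
  have up: "cond_guesswork n p W' \<le> Min (bound_term n k p ` {1..k})" if "feasible n k W'" for W'
  proof -
    have "\<forall>j'\<in>{1..k}. cond_guesswork n p W' \<le> bound_term n k p j'"
      using upper[OF bp dp s1 _ _ kn p0 that] by auto
    then show ?thesis using k0 by simp
  qed
  have "Min (bound_term n k p ` {1..k}) \<le> bound_term n k p j" using j by simp
  then have "cond_guesswork n p W = Min (bound_term n k p ` {1..k})" using up[OF F] cWb by simp
  then show ?thesis using F up by blast
qed

end
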